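(* Assume Hypotheses 1 and 2 (see context). For any $x_1,x_2\in U$ and $t_0>0$, if $x_2\in\mathcal{C}(x_1)$, $\Phi([0,t_0],x_1)\subset U$ and $\Phi([0,t_0],x_2)\subset U$, then $\Phi(t,x_2)\in\mathcal{C}(\Phi(t,x_1))$ for all $t\in[0,t_0]$.
   Context: System $\dot a=f(a,z)$, $\dot z=g(a,z)$, $(a,z)\in\mathbb{R}^n\times\mathbb{R}^m$, $x=(a,z)$, $X=\mathbb{R}^n\times\mathbb{R}^m$, with flow $\Phi(t,x)$; Euclidean inner product, norm, operator norm. $\mathcal{L}(x_1,x_2)=\|a_2-a_1\|^2-\|z_2-z_1\|^2$ for $x_i=(a_i,z_i)$; $\mathcal{C}(x)=\{x'\in X:\mathcal{L}(x',x)\ge0\}$; $\mathbb{B}_d(x)=\{(a',z'):\|a'-a\|\le d,\|z'-z\|\le d\}$. Hypothesis 1: $U$ is open and convex in $\mathbb{R}^n\times\mathbb{R}^m$, and there is $d>0$ with $\mathcal{C}(x)\cap U\subset\mathbb{B}_d(x)$ for all $x\in U$. Hypothesis 2: $f,g$ are $C^1$ on $U$; there exist a continuous positive $\alpha:U\to\mathbb{R}$, a continuous nonnegative $\ell:U\to\mathbb{R}$ and $c_1>0$ with, for all $x\in U$: $\langle a',D_af(x)a'\rangle\ge\alpha(x)\|a'\|^2$ for all $a'$; $\langle z',D_zg(x)z'\rangle\le\ell(x)\|z'\|^2$ for all $z'$; $\alpha(x)\ge\ell(x)+\|D_zf(x)\|+\|D_ag(x)\|+c_1$. *)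

theory Defs
  imports "HOL-Analysis.Analysis"
begin

text \<open>Points x = (a,z) of X = R^n x R^m are pairs; 'a plays R^n, 'b plays R^m.\<close>

definition LL :: "('a::real_normed_vector \<times> 'b::real_normed_vector) \<Rightarrow> ('a \<times> 'b) \<Rightarrow> real" where
  "LL x1 x2 = (norm (fst x2 - fst x1))\<^sup>2 - (norm (snd x2 - snd x1))\<^sup>2"

definition cone :: "('a::real_normed_vector \<times> 'b::real_normed_vector) \<Rightarrow> ('a \<times> 'b) set" where
  "cone x = {x'. LL x' x \<ge> 0}"

definition box_nbhd :: "real \<Rightarrow> ('a::real_normed_vector \<times> 'b::real_normed_vector) \<Rightarrow> ('a \<times> 'b) set" where
  "box_nbhd d x = {x'. norm (fst x' - fst x) \<le> d \<and> norm (snd x' - snd x) \<le> d}"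

definition is_trajectory ::
  "('a::real_normed_vector \<times> 'b::real_normed_vector \<Rightarrow> 'a) \<Rightarrow> ('a \<times> 'b \<Rightarrow> 'b) \<Rightarrow> real \<Rightarrow> ('a \<times> 'b) \<Rightarrow> (real \<Rightarrow> 'a \<times> 'b) \<Rightarrow> bool" where
  "is_trajectory f g t0 x0 \<phi> \<longleftrightarrow> \<phi> 0 = x0 \<and>
     (\<forall>t\<in>{0..t0}. (\<phi> has_vector_derivative (f (\<phi> t), g (\<phi> t))) (at t within {0..t0}))"

end

theory Submission
  imports Defs
begin

lemma bl_left: "bounded_linear (\<lambda>z'. blinfun_apply (B::('a::real_normed_vector \<times> 'b::real_normed_vector) \<Rightarrow>\<^sub>L 'c::real_normed_vector) (0, z'))"
  by (intro bounded_linear_compose[OF blinfun.bounded_linear_right] bounded_linear_Pair bounded_linear_zero bounded_linear_ident)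
lemma bl_right: "bounded_linear (\<lambda>a'. blinfun_apply (B::('a::real_normed_vector \<times> 'b::real_normed_vector) \<Rightarrow>\<^sub>L 'c::real_normed_vector) (a', 0))"
  by (intro bounded_linear_compose[OF blinfun.bounded_linear_right] bounded_linear_Pair bounded_linear_zero bounded_linear_ident)

lemma alg:
  fixes al l bf bg M a z c :: real
  assumes "0 \<le> a" "a \<le> z" "al \<le> M" "al \<ge> l + bf + bg + c" "c > 0" "bf \<ge> 0" "bg \<ge> 0" "l \<ge> 0"
  shows "al * a^2 - bf * a * z - bg * a * z - l * z^2 \<ge> M * (a^2 - z^2)"
proof -
  have e: "al * a^2 - bf * a * z - bg * a * z - l * z^2 - M * (a^2 - z^2)
     = (M - al) * (z^2 - a^2) + (al - l - bf - bg) * z^2 + (bf + bg) * z * (z - a)"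
    by (simp add: algebra_simps power2_eq_square)
  have "z^2 - a^2 \<ge> 0" using assms by (simp add: power_mono)
  hence "(M - al) * (z^2 - a^2) \<ge> 0" using assms by simp
  moreover have "(al - l - bf - bg) * z^2 \<ge> 0" using assms by simp
  moreover have "(bf + bg) * z * (z - a) \<ge> 0" using assms by simp
  ultimately show ?thesis using e by linarith
qed

lemma key:
  fixes f :: "'a::euclidean_space \<times> 'b::euclidean_space \<Rightarrow> 'a"
    and g :: "'a \<times> 'b \<Rightarrow> 'b"
    and Df :: "'a \<times> 'b \<Rightarrow> ('a \<times> 'b) \<Rightarrow>\<^sub>L 'a"
    and Dg :: "'a \<times> 'b \<Rightarrow> ('a \<times> 'b) \<Rightarrow>\<^sub>L 'b"
  assumes U_convex: "convex U"
    and f_deriv: "\<forall>x\<in>U. (f has_derivative blinfun_apply (Df x)) (at x)"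
    and g_deriv: "\<forall>x\<in>U. (g has_derivative blinfun_apply (Dg x)) (at x)"
    and ell_nonneg: "\<forall>x\<in>U. ell x \<ge> 0"
    and c1_pos: "c1 > 0"
    and H_a: "\<forall>x\<in>U. \<forall>a'. inner a' (Df x (a', 0)) \<ge> alpha x * (norm a')\<^sup>2"
    and H_z: "\<forall>x\<in>U. \<forall>z'. inner z' (Dg x (0, z')) \<le> ell x * (norm z')\<^sup>2"
    and H_gap: "\<forall>x\<in>U. alpha x \<ge> ell x + onorm (\<lambda>z'. Df x (0, z')) + onorm (\<lambda>a'. Dg x (a', 0)) + c1"
    and p1: "p1 \<in> U" and p2: "p2 \<in> U"
    and Mb: "\<forall>s\<in>{0..1}. alpha (p1 + s *\<^sub>R (p2 - p1)) \<le> M"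
    and le: "norm (fst (p2 - p1)) \<le> norm (snd (p2 - p1))"
  shows "inner (fst (p2 - p1)) (f p2 - f p1) - inner (snd (p2 - p1)) (g p2 - g p1)
     \<ge> M * ((norm (fst (p2 - p1)))\<^sup>2 - (norm (snd (p2 - p1)))\<^sup>2)"
proof -
  define A where "A = fst (p2 - p1)"
  define Z where "Z = snd (p2 - p1)"
  define D where "D = p2 - p1"
  have DAZ: "D = (A, 0) + (0, Z)" unfolding A_def Z_def D_def by (simp add: prod_eq_iff)
  define h where "h = (\<lambda>s::real. inner A (f (p1 + s *\<^sub>R D)) - inner Z (g (p1 + s *\<^sub>R D)))"
  have inU: "p1 + s *\<^sub>R D \<in> U" if "0 \<le> s" "s \<le> 1" for s
  proof -
    have "p1 + s *\<^sub>R D = (1 - s) *\<^sub>R p1 + s *\<^sub>R p2" unfolding D_def by (simp add: algebra_simps)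
    thus ?thesis using U_convex p1 p2 that unfolding convex_def by (metis diff_ge_0_iff_ge diff_add_cancel add.commute)
  qed
  have hd: "(h has_derivative (\<lambda>k. inner A (Df (p1 + s *\<^sub>R D) (k *\<^sub>R D)) - inner Z (Dg (p1 + s *\<^sub>R D) (k *\<^sub>R D)))) (at s within {0..1})"
    if "0 \<le> s" "s \<le> 1" for s
  proof -
    have y: "p1 + s *\<^sub>R D \<in> U" using inU that .
    have lin: "((\<lambda>s. p1 + s *\<^sub>R D) has_derivative (\<lambda>k. k *\<^sub>R D)) (at s within {0..1})"
      by (auto intro!: derivative_eq_intros)
    have fd: "((\<lambda>s. f (p1 + s *\<^sub>R D)) has_derivative (\<lambda>k. Df (p1 + s *\<^sub>R D) (k *\<^sub>R D))) (at s within {0..1})"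
      using has_derivative_in_compose[OF lin, of f] f_deriv y
      by (auto simp: o_def intro: has_derivative_at_withinI)
    have gd: "((\<lambda>s. g (p1 + s *\<^sub>R D)) has_derivative (\<lambda>k. Dg (p1 + s *\<^sub>R D) (k *\<^sub>R D))) (at s within {0..1})"
      using has_derivative_in_compose[OF lin, of g] g_deriv y
      by (auto simp: o_def intro: has_derivative_at_withinI)
    show ?thesis unfolding h_def
      by (intro has_derivative_diff has_derivative_inner_right fd gd)
  qed
  obtain \<xi> where xi: "\<xi> \<in> {0<..<1}" and mv: "h 1 - h 0 = inner A (Df (p1 + \<xi> *\<^sub>R D) ((1 - 0) *\<^sub>R D)) - inner Z (Dg (p1 + \<xi> *\<^sub>R D) ((1 - 0) *\<^sub>R D))"
    using mvt_simple[of 0 1 h, OF _ hd] by auto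
  define y where "y = p1 + \<xi> *\<^sub>R D"
  have yU: "y \<in> U" using inU xi unfolding y_def by auto
  have lhs: "inner A (f p2 - f p1) - inner Z (g p2 - g p1) = inner A (Df y D) - inner Z (Dg y D)"
  proof -
    have "h 1 - h 0 = inner A (f p2 - f p1) - inner Z (g p2 - g p1)"
      unfolding h_def D_def by (simp add: inner_diff_right)
    thus ?thesis using mv unfolding y_def by simp
  qed
  define bf where "bf = onorm (\<lambda>z'. Df y (0, z'))"
  define bg where "bg = onorm (\<lambda>a'. Dg y (a', 0))"
  have bf0: "bf \<ge> 0" unfolding bf_def by (rule onorm_pos_le[OF bl_left])
  have bg0: "bg \<ge> 0" unfolding bg_def by (rule onorm_pos_le[OF bl_right])
  have t1: "inner A (Df y (A, 0)) \<ge> alpha y * (norm A)^2" using H_a yU by auto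
  have t2: "inner A (Df y (0, Z)) \<ge> - (bf * norm A * norm Z)"
  proof -
    have "\<bar>inner A (Df y (0, Z))\<bar> \<le> norm A * norm (Df y (0, Z))" by (rule Cauchy_Schwarz_ineq2)
    also have "\<dots> \<le> norm A * (bf * norm Z)"
      unfolding bf_def using onorm[OF bl_left, of "Df y" Z] by (simp add: mult_left_mono)
    finally show ?thesis by (simp add: algebra_simps)
  qed
  have t3: "inner Z (Dg y (A, 0)) \<le> bg * norm A * norm Z"
  proof -
    have "\<bar>inner Z (Dg y (A, 0))\<bar> \<le> norm Z * norm (Dg y (A, 0))" by (rule Cauchy_Schwarz_ineq2)
    also have "\<dots> \<le> norm Z * (bg * norm A)"
      unfolding bg_def using onorm[OF bl_right, of "Dg y" A] by (simp add: mult_left_mono)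
    finally show ?thesis by (simp add: algebra_simps)
  qed
  have t4: "inner Z (Dg y (0, Z)) \<le> ell y * (norm Z)^2" using H_z yU by auto
  have split: "inner A (Df y D) - inner Z (Dg y D) = inner A (Df y (A, 0)) + inner A (Df y (0, Z)) - inner Z (Dg y (A, 0)) - inner Z (Dg y (0, Z))"
    by (simp only: DAZ blinfun.add_right inner_add_right)
  have "alpha y * (norm A)^2 - bf * norm A * norm Z - bg * norm A * norm Z - ell y * (norm Z)^2 \<ge> M * ((norm A)^2 - (norm Z)^2)"
  proof (rule alg[where c=c1])
    show "alpha y \<le> M" using Mb xi unfolding y_def D_def by auto
    show "ell y + bf + bg + c1 \<le> alpha y" using H_gap yU unfolding bf_def bg_def by auto
  qed (use c1_pos bf0 bg0 ell_nonneg yU le A_def Z_def in auto)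
  thus ?thesis using lhs split t1 t2 t3 t4 unfolding A_def[symmetric] Z_def[symmetric] by linarith
qed
lemma Lderiv:
  fixes x :: "real \<Rightarrow> 'a::euclidean_space \<times> 'b::euclidean_space"
  assumes "(x has_vector_derivative v) (at t within S)"
  shows "((\<lambda>t. (norm (fst (x t)))\<^sup>2 - (norm (snd (x t)))\<^sup>2) has_real_derivative
           2 * (inner (fst (x t)) (fst v) - inner (snd (x t)) (snd v))) (at t within S)"
proof -
  have d: "(x has_derivative (\<lambda>h. h *\<^sub>R v)) (at t within S)"
    using assms by (simp add: has_vector_derivative_def)
  have d1: "((\<lambda>t. fst (x t)) has_derivative (\<lambda>h. h *\<^sub>R fst v)) (at t within S)"
    using has_derivative_fst[OF d] by simp
  have d2: "((\<lambda>t. snd (x t)) has_derivative (\<lambda>h. h *\<^sub>R snd v)) (at t within S)"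
    using has_derivative_snd[OF d] by simp
  have "((\<lambda>t. inner (fst (x t)) (fst (x t)) - inner (snd (x t)) (snd (x t))) has_derivative
     (\<lambda>h. inner (fst (x t)) (h *\<^sub>R fst v) + inner (h *\<^sub>R fst v) (fst (x t))
        - (inner (snd (x t)) (h *\<^sub>R snd v) + inner (h *\<^sub>R snd v) (snd (x t))))) (at t within S)"
    by (intro has_derivative_diff has_derivative_inner d1 d2)
  moreover have "(\<lambda>h. inner (fst (x t)) (h *\<^sub>R fst v) + inner (h *\<^sub>R fst v) (fst (x t))
        - (inner (snd (x t)) (h *\<^sub>R snd v) + inner (h *\<^sub>R snd v) (snd (x t))))
     = (*) (2 * (inner (fst (x t)) (fst v) - inner (snd (x t)) (snd v)))"
    by (auto simp: algebra_simps inner_commute fun_eq_iff)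
  ultimately show ?thesis
    unfolding has_field_derivative_def power2_norm_eq_inner by simp
qed

theorem lemma2p1:
  fixes f :: "'a::euclidean_space \<times> 'b::euclidean_space \<Rightarrow> 'a"
    and g :: "'a \<times> 'b \<Rightarrow> 'b"
    and Df :: "'a \<times> 'b \<Rightarrow> ('a \<times> 'b) \<Rightarrow>\<^sub>L 'a"
    and Dg :: "'a \<times> 'b \<Rightarrow> ('a \<times> 'b) \<Rightarrow>\<^sub>L 'b"
    and U :: "('a \<times> 'b) set"
    and alpha ell :: "'a \<times> 'b \<Rightarrow> real"
    and c1 d t0 :: real
    and x1 x2 :: "'a \<times> 'b"
    and phi1 phi2 :: "real \<Rightarrow> 'a \<times> 'b"
  assumes U_open: "open U" and U_convex: "convex U"
    and d_pos: "d > 0"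
    and cone_box: "\<forall>x\<in>U. cone x \<inter> U \<subseteq> box_nbhd d x"
    and f_deriv: "\<forall>x\<in>U. (f has_derivative blinfun_apply (Df x)) (at x)"
    and g_deriv: "\<forall>x\<in>U. (g has_derivative blinfun_apply (Dg x)) (at x)"
    and Df_cont: "continuous_on U Df" and Dg_cont: "continuous_on U Dg"
    and alpha_cont: "continuous_on U alpha" and ell_cont: "continuous_on U ell"
    and alpha_pos: "\<forall>x\<in>U. alpha x > 0" and ell_nonneg: "\<forall>x\<in>U. ell x \<ge> 0"
    and c1_pos: "c1 > 0"
    and H_a: "\<forall>x\<in>U. \<forall>a'. inner a' (Df x (a', 0)) \<ge> alpha x * (norm a')\<^sup>2"
    and H_z: "\<forall>x\<in>U. \<forall>z'. inner z' (Dg x (0, z')) \<le> ell x * (norm z')\<^sup>2"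
    and H_gap: "\<forall>x\<in>U. alpha x \<ge> ell x + onorm (\<lambda>z'. Df x (0, z')) + onorm (\<lambda>a'. Dg x (a', 0)) + c1"
    and x1_U: "x1 \<in> U" and x2_U: "x2 \<in> U"
    and t0_pos: "t0 > 0"
    and x2_cone: "x2 \<in> cone x1"
    and traj1: "is_trajectory f g t0 x1 phi1" and traj2: "is_trajectory f g t0 x2 phi2"
    and in_U1: "phi1 ` {0..t0} \<subseteq> U" and in_U2: "phi2 ` {0..t0} \<subseteq> U"
  shows "\<forall>t\<in>{0..t0}. phi2 t \<in> cone (phi1 t)"
proof -
  have c1: "continuous_on {0..t0} phi1" using traj1 unfolding is_trajectory_def
    by (auto simp: continuous_on_eq_continuous_within intro: has_vector_derivative_continuous)
  have c2: "continuous_on {0..t0} phi2" using traj2 unfolding is_trajectory_def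
    by (auto simp: continuous_on_eq_continuous_within intro: has_vector_derivative_continuous)
  define S where "S = (\<lambda>p. phi1 (fst p) + snd p *\<^sub>R (phi2 (fst p) - phi1 (fst p))) ` ({0..t0} \<times> {0..1::real})"
  have ca: "continuous_on ({0..t0} \<times> {0..1::real}) (\<lambda>p. phi1 (fst p))"
    by (rule continuous_on_compose2[OF c1 continuous_on_fst]) auto
  have cb: "continuous_on ({0..t0} \<times> {0..1::real}) (\<lambda>p. phi2 (fst p))"
    by (rule continuous_on_compose2[OF c2 continuous_on_fst]) auto
  have cS: "continuous_on ({0..t0} \<times> {0..1::real}) (\<lambda>p. phi1 (fst p) + snd p *\<^sub>R (phi2 (fst p) - phi1 (fst p)))"
    by (intro continuous_intros ca cb)
  have compS: "compact S" unfolding S_def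
    by (intro compact_continuous_image cS compact_Times compact_Icc)
  have SU: "S \<subseteq> U"
  proof
    fix y assume "y \<in> S"
    then obtain t s where ts: "t \<in> {0..t0}" "s \<in> {0..1::real}" and y: "y = phi1 t + s *\<^sub>R (phi2 t - phi1 t)"
      unfolding S_def by auto
    have "y = (1 - s) *\<^sub>R phi1 t + s *\<^sub>R phi2 t" using y by (simp add: algebra_simps)
    moreover have "phi1 t \<in> U" "phi2 t \<in> U" using ts in_U1 in_U2 by auto
    ultimately show "y \<in> U" using convexD[OF U_convex, of "phi1 t" "phi2 t" "1 - s" s] ts by simp
  qed
  have "compact (alpha ` S)"
    by (intro compact_continuous_image compS continuous_on_subset[OF alpha_cont SU])
  hence "bounded (alpha ` S)" by (rule compact_imp_bounded)
  then obtain M0 where M0: "\<forall>x\<in>alpha ` S. norm x \<le> M0" unfolding bounded_iff by blast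
  obtain M where M: "\<forall>y\<in>S. norm (alpha y) \<le> M" using M0 by blast
  define L where "L = (\<lambda>t. (norm (fst (phi2 t - phi1 t)))\<^sup>2 - (norm (snd (phi2 t - phi1 t)))\<^sup>2)"
  define Ld where "Ld = (\<lambda>t. 2 * (inner (fst (phi2 t - phi1 t)) (f (phi2 t) - f (phi1 t))
                          - inner (snd (phi2 t - phi1 t)) (g (phi2 t) - g (phi1 t))))"
  have Lder: "(L has_real_derivative Ld t) (at t within {0..t0})" if t: "t \<in> {0..t0}" for t
  proof -
    have "((\<lambda>t. phi2 t - phi1 t) has_vector_derivative ((f (phi2 t), g (phi2 t)) - (f (phi1 t), g (phi1 t)))) (at t within {0..t0})"
      using traj1 traj2 t unfolding is_trajectory_def by (intro has_vector_derivative_diff) auto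
    from Lderiv[OF this] show ?thesis unfolding L_def Ld_def by simp
  qed
  have Lkey: "Ld t \<ge> 2 * M * L t" if t: "t \<in> {0..t0}" and Lle: "L t \<le> 0" for t
  proof -
    have le: "norm (fst (phi2 t - phi1 t)) \<le> norm (snd (phi2 t - phi1 t))"
    proof (rule power2_le_imp_le)
      show "(norm (fst (phi2 t - phi1 t)))\<^sup>2 \<le> (norm (snd (phi2 t - phi1 t)))\<^sup>2"
        using Lle unfolding L_def by linarith
    qed (rule norm_ge_zero)
    have p1U: "phi1 t \<in> U" using in_U1 t by blast
    have p2U: "phi2 t \<in> U" using in_U2 t by blast
    have Mb: "\<forall>s\<in>{0..1}. alpha (phi1 t + s *\<^sub>R (phi2 t - phi1 t)) \<le> M"
    proof
      fix s :: real assume "s \<in> {0..1}"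
      have "phi1 t + s *\<^sub>R (phi2 t - phi1 t) \<in> S" unfolding S_def
      proof (rule image_eqI[where x="(t, s)"])
        show "(t, s) \<in> {0..t0} \<times> {0..1}" using t \<open>s \<in> {0..1}\<close> by blast
      qed simp
      hence "norm (alpha (phi1 t + s *\<^sub>R (phi2 t - phi1 t))) \<le> M" using M by blast
      thus "alpha (phi1 t + s *\<^sub>R (phi2 t - phi1 t)) \<le> M" by simp
    qed
    have "inner (fst (phi2 t - phi1 t)) (f (phi2 t) - f (phi1 t)) - inner (snd (phi2 t - phi1 t)) (g (phi2 t) - g (phi1 t))
     \<ge> M * ((norm (fst (phi2 t - phi1 t)))\<^sup>2 - (norm (snd (phi2 t - phi1 t)))\<^sup>2)"
      by (rule key[OF U_convex f_deriv g_deriv ell_nonneg c1_pos H_a H_z H_gap p1U p2U Mb le])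
    thus ?thesis unfolding Ld_def L_def by simp
  qed
  define E where "E = (\<lambda>t. exp (-2 * M * t))"
  define N where "N = (\<lambda>t. E t * L t)"
  define Nd where "Nd = (\<lambda>t. (-2 * M * E t) * L t + Ld t * E t)"
  have Nder: "(N has_real_derivative Nd t) (at t within {0..t0})" if t: "t \<in> {0..t0}" for t
  proof -
    have "(E has_real_derivative (-2 * M * E t)) (at t within {0..t0})"
      unfolding E_def by (auto intro!: derivative_eq_intros)
    from DERIV_mult[OF this Lder[OF t]] show ?thesis unfolding N_def Nd_def by simp
  qed
  have Epos: "E t > 0" for t unfolding E_def by simp
  have Ndpos: "Nd t \<ge> 0" if t: "t \<in> {0..t0}" and Lle: "L t \<le> 0" for t
  proof -
    have "Nd t = E t * (Ld t - 2 * M * L t)" unfolding Nd_def by (simp add: algebra_simps)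
    thus ?thesis using Lkey[OF t Lle] Epos[of t] by simp
  qed
  have Ncont: "continuous_on {0..t0} N"
    unfolding continuous_on_eq_continuous_within using Nder DERIV_continuous by blast
  have L0: "L 0 \<ge> 0" using x2_cone traj1 traj2 unfolding is_trajectory_def cone_def LL_def L_def
    by (simp add: norm_minus_commute)
  have Lpos: "L t1 \<ge> 0" if t1: "t1 \<in> {0..t0}" for t1
  proof (rule ccontr)
    assume "\<not> L t1 \<ge> 0"
    hence Lneg: "L t1 < 0" by simp
    hence Nneg: "N t1 < 0" unfolding N_def using Epos[of t1] by (simp add: mult_pos_neg)
    define T where "T = {s \<in> {0..t1}. (\<lambda>_. 0) s \<le> N s}"
    have closedT: "closed T" unfolding T_def
      by (intro continuous_on_closed_Collect_le continuous_on_const continuous_on_subset[OF Ncont]) (use t1 in auto)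
    have "0 \<in> T" unfolding T_def N_def using t1 L0 Epos[of 0] by simp
    hence ne: "T \<noteq> {}" by auto
    have bdd: "bdd_above T" unfolding T_def by (auto intro: bdd_aboveI[of _ t1])
    define s where "s = Sup T"
    have sT: "s \<in> T" unfolding s_def using closed_contains_Sup[OF ne bdd closedT] .
    hence s0: "0 \<le> s" "s \<le> t1" "N s \<ge> 0" unfolding T_def by auto
    have "s \<noteq> t1" using sT Nneg unfolding T_def by auto
    hence st: "s < t1" using s0 by simp
    have neg: "N u < 0" if "u \<in> {s<..t1}" for u
    proof (rule ccontr)
      assume "\<not> N u < 0"
      hence "u \<in> T" unfolding T_def using that s0 by auto
      hence "u \<le> s" unfolding s_def by (rule cSup_upper[OF _ bdd])
      thus False using that by simp
    qed
    have dd: "(N has_derivative (*) (Nd x)) (at x within {s..t1})" if "s \<le> x" "x \<le> t1" for x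
    proof -
      have "x \<in> {0..t0}" using that s0 t1 by auto
      from Nder[OF this] have "(N has_derivative (*) (Nd x)) (at x within {0..t0})"
        by (simp add: has_field_derivative_def)
      thus ?thesis by (rule has_derivative_subset) (use s0 t1 in auto)
    qed
    obtain \<xi> where xi: "\<xi> \<in> {s<..<t1}" and mv: "N t1 - N s = Nd \<xi> * (t1 - s)"
      using mvt_simple[OF st dd] by auto
    have "N \<xi> < 0" using neg xi by auto
    have "L \<xi> \<le> 0"
    proof (rule ccontr)
      assume "\<not> L \<xi> \<le> 0"
      hence "N \<xi> > 0" unfolding N_def using Epos[of \<xi>] by simp
      thus False using \<open>N \<xi> < 0\<close> by simp
    qed
    moreover have xi0: "\<xi> \<in> {0..t0}" using xi s0 t1 by auto
    ultimately have "Nd \<xi> \<ge> 0" using Ndpos by auto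
    hence "Nd \<xi> * (t1 - s) \<ge> 0" using st by simp
    hence "N t1 \<ge> N s" using mv by linarith
    thus False using Nneg s0 by simp
  qed
  show ?thesis
  proof
    fix t assume t: "t \<in> {0..t0}"
    show "phi2 t \<in> cone (phi1 t)" using Lpos[OF t] unfolding cone_def LL_def L_def
      by (simp add: norm_minus_commute)
  qed
qed

end
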